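(* Let $T \ge 1$ and $m_u \ge 1$ be integers. Let $\mathscr V_0^*$ be a finite collection of pairwise disjoint intervals of the form $\mathcal V_0 = [(\underline v_{t|0})_{t=0}^{T-1}, (\bar v_{t|0})_{t=0}^{T-1}] \subset \mathbb R^{T m_u}$, with $\underline v_{t|0}, \bar v_{t|0} \in \{0,1\}^{m_u}$ and $\underline v_{t|0} \le \bar v_{t|0}$, whose union contains $\{0,1\}^{T m_u}$. Let $v_0 \in \{0,1\}^{m_u}$. Let $\mathscr V_1^0$ be the collection obtained as follows: for every $\mathcal V_0 \in \mathscr V_0^*$ satisfying $\underline v_{0|0} \le v_0 \le \bar v_{0|0}$, include the interval $$\mathcal V_1 := [(\underline v_{1|0}, \ldots, \underline v_{T-1|0}, 0, \ldots, 0), (\bar v_{1|0}, \ldots, \bar v_{T-1|0}, 1, \ldots, 1)],$$ where the trailing blocks of zeros and ones each have $m_u$ entries; intervals $\mathcal V_0$ not satisfying this condition are discarded. Then the union of the sets in $\mathscr V_1^0$ contains $\{0,1\}^{T m_u}$, and the sets in $\mathscr V_1^0$ are pairwise disjoint intervals.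
   Context: For $a, b \in \mathbb R^{N}$ with $a \le b$ componentwise, $[a,b]$ denotes the box $\{z \in \mathbb R^N : a \le z \le b\}$. A vector in $\mathbb R^{T m_u}$ is viewed as a concatenation $(v_0, \ldots, v_{T-1})$ of $T$ blocks $v_t \in \mathbb R^{m_u}$; inequalities between vectors are componentwise. *)

theory Defs
  imports Complex_Main "HOL-Library.Disjoint_Sets"
begin

text \<open>Vectors in R^N are real lists of length N. A vector in R^(T*mu) is the
concatenation of T blocks of length mu; block t occupies indices t*mu .. t*mu+mu-1.\<close>

definition box :: "real list \<Rightarrow> real list \<Rightarrow> real list set" where
  "box a b = {z. length z = length a \<and> (\<forall>i<length a. a ! i \<le> z ! i \<and> z ! i \<le> b ! i)}"

definition binary_cube :: "nat \<Rightarrow> real list set" where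
  "binary_cube N = {z. length z = N \<and> set z \<subseteq> {0, 1}}"

definition le_vec :: "real list \<Rightarrow> real list \<Rightarrow> bool" where
  "le_vec a b \<longleftrightarrow> length a = length b \<and> (\<forall>i<length a. a ! i \<le> b ! i)"

definition shift_lo :: "nat \<Rightarrow> real list \<Rightarrow> real list" where
  "shift_lo mu a = drop mu a @ replicate mu 0"

definition shift_hi :: "nat \<Rightarrow> real list \<Rightarrow> real list" where
  "shift_hi mu b = drop mu b @ replicate mu 1"

definition retained :: "nat \<Rightarrow> real list \<Rightarrow> (real list \<times> real list) set \<Rightarrow> (real list \<times> real list) set" where
  "retained mu v0 S = {(a, b) \<in> S. \<forall>j<mu. a ! j \<le> v0 ! j \<and> v0 ! j \<le> b ! j}"

end

theory Submission
  imports Defs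
begin

lemma key:
  fixes a b z v0 :: "real list"
  assumes la: "length a = N" and lb: "length b = N" and mN: "mu \<le> N"
    and lv: "length v0 = mu"
    and ret: "\<forall>j<mu. a ! j \<le> v0 ! j \<and> v0 ! j \<le> b ! j"
    and z: "z \<in> box (shift_lo mu a) (shift_hi mu b)"
  shows "v0 @ take (N - mu) z \<in> box a b"
proof -
  have lz: "length z = N" using z la mN by (simp add: box_def shift_lo_def)
  have "a ! i \<le> (v0 @ take (N - mu) z) ! i \<and> (v0 @ take (N - mu) z) ! i \<le> b ! i"
    if i: "i < N" for i
  proof (cases "i < mu")
    case True then show ?thesis using ret lv by (simp add: nth_append)
  next
    case False
    have "i - mu < length (shift_lo mu a)" using i la mN False by (simp add: shift_lo_def)
    then have "shift_lo mu a ! (i - mu) \<le> z ! (i - mu) \<and> z ! (i - mu) \<le> shift_hi mu b ! (i - mu)"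
      using z by (simp add: box_def)
    moreover have "i - mu < N - mu" using i False by linarith
    then have "shift_lo mu a ! (i - mu) = a ! i" using i la mN False
      by (simp add: shift_lo_def nth_append)
    moreover have "shift_hi mu b ! (i - mu) = b ! i" using i lb mN False \<open>i - mu < N - mu\<close>
      by (simp add: shift_hi_def nth_append)
    ultimately show ?thesis using False lv i by (simp add: nth_append)
  qed
  then show ?thesis using la lz lv mN by (simp add: box_def)
qed

theorem proposition1:
  fixes T mu :: nat
    and S :: "(real list \<times> real list) set"
    and v0 :: "real list"
  assumes "T \<ge> 1" and "mu \<ge> 1"
    and "finite S"
    and "\<forall>(a, b) \<in> S. length a = T * mu \<and> length b = T * mu \<and>
            set a \<subseteq> {0, 1} \<and> set b \<subseteq> {0, 1} \<and> le_vec a b"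
    and "disjoint_family_on (\<lambda>(a, b). box a b) S"
    and "binary_cube (T * mu) \<subseteq> (\<Union>(a, b) \<in> S. box a b)"
    and "length v0 = mu" and "set v0 \<subseteq> {0, 1}"
  shows "binary_cube (T * mu) \<subseteq>
           (\<Union>(a, b) \<in> retained mu v0 S. box (shift_lo mu a) (shift_hi mu b)) \<and>
         disjoint_family_on (\<lambda>(a, b). box (shift_lo mu a) (shift_hi mu b)) (retained mu v0 S) \<and>
         (\<forall>(a, b) \<in> retained mu v0 S.
           length (shift_lo mu a) = T * mu \<and> length (shift_hi mu b) = T * mu \<and>
           set (shift_lo mu a) \<subseteq> {0, 1} \<and> set (shift_hi mu b) \<subseteq> {0, 1} \<and>
           le_vec (shift_lo mu a) (shift_hi mu b))"
proof (intro conjI)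
  have mN: "mu \<le> T * mu" using assms(1) by simp
  show "binary_cube (T * mu) \<subseteq>
           (\<Union>(a, b) \<in> retained mu v0 S. box (shift_lo mu a) (shift_hi mu b))"
  proof
    fix z assume z: "z \<in> binary_cube (T * mu)"
    define w where "w = v0 @ take (T * mu - mu) z"
    have lz: "length z = T * mu" and sz: "set z \<subseteq> {0,1}" using z by (auto simp: binary_cube_def)
    have "set (take (T * mu - mu) z) \<subseteq> {0,1}" using sz by (meson order_trans set_take_subset)
    then have "set w \<subseteq> {0,1}" unfolding w_def set_append by (rule Un_least[OF assms(8)])
    moreover have "length w = T * mu" using assms(7) lz mN unfolding w_def by simp
    ultimately have "w \<in> binary_cube (T * mu)" by (simp add: binary_cube_def)
    then have "w \<in> (\<Union>(a, b) \<in> S. box a b)" using assms(6) by (rule subsetD[rotated])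
    then obtain p where p: "p \<in> S" "w \<in> (case p of (a, b) \<Rightarrow> box a b)" by (rule UN_E)
    obtain a b where pab: "p = (a, b)" by (cases p)
    have ab: "(a,b) \<in> S" "w \<in> box a b" using p pab by simp_all
    have la: "length a = T * mu" and lb: "length b = T * mu" using bspec[OF assms(4) ab(1)] by simp_all
    have ret: "\<forall>j<mu. a ! j \<le> v0 ! j \<and> v0 ! j \<le> b ! j"
    proof (intro allI impI)
      fix j assume j: "j < mu"
      then have jT: "j < T * mu" using mN by linarith
      have "a ! j \<le> w ! j \<and> w ! j \<le> b ! j" using ab(2) la jT by (simp add: box_def)
      then show "a ! j \<le> v0 ! j \<and> v0 ! j \<le> b ! j" using j assms(7) by (simp add: w_def nth_append)
    qed
    then have r: "(a,b) \<in> retained mu v0 S" using ab(1) by (simp add: retained_def)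
    have "z \<in> box (shift_lo mu a) (shift_hi mu b)"
    proof -
      have "shift_lo mu a ! i \<le> z ! i \<and> z ! i \<le> shift_hi mu b ! i" if i: "i < T * mu" for i
      proof (cases "i < T * mu - mu")
        case True
        have "a ! (mu + i) \<le> w ! (mu + i) \<and> w ! (mu + i) \<le> b ! (mu + i)"
          using ab(2) la True by (simp add: box_def)
        moreover have "w ! (mu + i) = z ! i" using True assms(7) by (simp add: w_def nth_append)
        ultimately show ?thesis using True la lb mN
          by (simp add: shift_lo_def shift_hi_def nth_append)
      next
        case False
        have "z ! i \<in> {0,1}" using sz i lz by (metis nth_mem subsetD)
        then show ?thesis using False la lb mN i
          by (auto simp: shift_lo_def shift_hi_def nth_append)
      qed
      then show ?thesis using lz la mN by (simp add: box_def shift_lo_def)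
    qed
    then have zb: "z \<in> box (shift_lo mu a) (shift_hi mu b)" .
    show "z \<in> (\<Union>(a, b) \<in> retained mu v0 S. box (shift_lo mu a) (shift_hi mu b))"
      by (rule UN_I[OF r]) (simp add: zb)
  qed
  show "disjoint_family_on (\<lambda>(a, b). box (shift_lo mu a) (shift_hi mu b)) (retained mu v0 S)"
    unfolding disjoint_family_on_def
  proof (intro ballI impI)
    fix p q
    assume rp: "p \<in> retained mu v0 S" and rq: "q \<in> retained mu v0 S" and npq: "p \<noteq> q"
    obtain a b where pab: "p = (a, b)" by (cases p)
    obtain a' b' where qab: "q = (a', b')" by (cases q)
    have r: "(a,b) \<in> retained mu v0 S" using rp pab by simp
    have r': "(a',b') \<in> retained mu v0 S" using rq qab by simp
    have ne: "(a,b) \<noteq> (a',b')" using npq pab qab by simp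
    show "(case p of (a, b) \<Rightarrow> box (shift_lo mu a) (shift_hi mu b)) \<inter>
          (case q of (a, b) \<Rightarrow> box (shift_lo mu a) (shift_hi mu b)) = {}"
    proof (rule equals0I)
    fix z assume "z \<in> (case p of (a, b) \<Rightarrow> box (shift_lo mu a) (shift_hi mu b)) \<inter>
          (case q of (a, b) \<Rightarrow> box (shift_lo mu a) (shift_hi mu b))"
    then have z1: "z \<in> box (shift_lo mu a) (shift_hi mu b)"
      and z2: "z \<in> box (shift_lo mu a') (shift_hi mu b')" using pab qab by auto

    have S1: "(a,b) \<in> S" and R1: "\<forall>j<mu. a ! j \<le> v0 ! j \<and> v0 ! j \<le> b ! j"
      using r by (auto simp: retained_def)
    have S2: "(a',b') \<in> S" and R2: "\<forall>j<mu. a' ! j \<le> v0 ! j \<and> v0 ! j \<le> b' ! j"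
      using r' by (auto simp: retained_def)
    have w1: "v0 @ take (T*mu - mu) z \<in> box a b"
      using key[OF _ _ mN assms(7) R1 z1] bspec[OF assms(4) S1] by simp
    have w2: "v0 @ take (T*mu - mu) z \<in> box a' b'"
      using key[OF _ _ mN assms(7) R2 z2] bspec[OF assms(4) S2] by simp
    have "box a b \<inter> box a' b' = {}" using assms(5) S1 S2 ne
      unfolding disjoint_family_on_def by (metis (no_types, lifting) case_prod_conv)
    then show False using w1 w2 by (metis IntI empty_iff)
    qed
  qed
  show "\<forall>(a, b) \<in> retained mu v0 S.
           length (shift_lo mu a) = T * mu \<and> length (shift_hi mu b) = T * mu \<and>
           set (shift_lo mu a) \<subseteq> {0, 1} \<and> set (shift_hi mu b) \<subseteq> {0, 1} \<and>
           le_vec (shift_lo mu a) (shift_hi mu b)"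
  proof (clarify)
    fix a b assume r: "(a,b) \<in> retained mu v0 S"
    then have S1: "(a,b) \<in> S" by (simp add: retained_def)
    then have la: "length a = T * mu" and lb: "length b = T * mu" and sa: "set a \<subseteq> {0,1}"
      and sb: "set b \<subseteq> {0,1}" and le: "le_vec a b" using bspec[OF assms(4) S1] by simp_all
    have "set (drop mu a) \<subseteq> {0,1}" using sa by (meson order_trans set_drop_subset)
    moreover have "set (drop mu b) \<subseteq> {0,1}" using sb by (meson order_trans set_drop_subset)
    moreover have "le_vec (shift_lo mu a) (shift_hi mu b)"
      unfolding le_vec_def
    proof (intro conjI allI impI)
      show "length (shift_lo mu a) = length (shift_hi mu b)" using la lb by (simp add: shift_lo_def shift_hi_def)
      fix i assume i: "i < length (shift_lo mu a)"
      show "shift_lo mu a ! i \<le> shift_hi mu b ! i"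
      proof (cases "i < T * mu - mu")
        case True
        then have "mu + i < T * mu" by linarith
        then have "a ! (mu + i) \<le> b ! (mu + i)" using le la unfolding le_vec_def by simp
        then show ?thesis using True la lb mN
          by (simp add: shift_lo_def shift_hi_def nth_append)
      next
        case False
        have "i < T * mu" using i la mN by (simp add: shift_lo_def)
        then have "i - (T * mu - mu) < mu" using False mN by linarith
        then show ?thesis using False la lb by (simp add: shift_lo_def shift_hi_def nth_append)
      qed
    qed
    ultimately show "length (shift_lo mu a) = T * mu \<and> length (shift_hi mu b) = T * mu \<and>
           set (shift_lo mu a) \<subseteq> {0, 1} \<and> set (shift_hi mu b) \<subseteq> {0, 1} \<and>
           le_vec (shift_lo mu a) (shift_hi mu b)"
      using la lb mN by (auto simp: shift_lo_def shift_hi_def)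
  qed
qed

end
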